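(* Let $r_0,\overline{r_0},l_0\in\mathbb N$, let $G_0\in\mathcal C_{V_0,2l_0}$ and $\overline{G_0}\in\mathcal C_{\overline V_0,2l_0}$ be circuit multigraphs without balanced leaves on finite vertex sets $V_0,\overline V_0\subset\mathbb N$ with $\#V_0=r_0$, $\#\overline V_0=\overline{r_0}$, and let $V'\subset\mathbb N$ be a finite set with $l':=\#V'$, disjoint from $V_0$ and $\overline V_0$. Assume that if $l_0=1$ and $G_0$ has a route $(v_i,v_j)$ with $v_i\ne v_j$, then $v_i,v_j$ are larger than all elements of $V'$, and likewise for $\overline{G_0}$. Then for every $B\subset V'$, $$\#\{G\in\mathcal C_{V_0\sqcup V',2l_0+2l'}\mid \operatorname S(G)=G_0,\ B(G)\cap V'=B\}=\#\{G\in\mathcal C_{\overline V_0\sqcup V',2l_0+2l'}\mid \operatorname S(G)=\overline{G_0},\ B(G)\cap V'=B\}.$$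
   Context: Vertices are positive integers with their natural order. For a finite $V\subset\mathbb N$ and $N\ge1$, a route through $V$ of length $N$ is a sequence $\mathbf i=(i_1,\dots,i_N)\in V^N$ whose set of entries equals $V$; its circuit multigraph $G_{\mathbf i}$ has vertex set $V$ and edges $1,\dots,N$ (own identity), edge $k<N$ from $i_k$ to $i_{k+1}$, edge $N$ from $i_N$ to $i_1$; $\mathcal C_{V,N}$ is the set of these, identified with their routes. Black vertices: $B(G_{\mathbf i})=\{i_t:t\text{ odd}\}$. Balanced leaf (only when $N>2$): a vertex $v$ occurring exactly once in $\mathbf i$, say $i_t=v$, with equal cyclic neighbours $i_{t-1}=i_{t+1}$ (indices mod $N$). Removing $v=i_t$: delete positions $t,t+1$ if $t<N$, positions $N-1,N$ if $t=N$. Seed graph: $\operatorname S(G)=G$ if $G$ has no balanced leaf, otherwise $\operatorname S(G)=\operatorname S(\widetilde G)$ with $\widetilde G$ being $G$ with its smallest balanced leaf removed. *)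

theory Defs
  imports Main
begin

text \<open>Routes are lists (0-based positions). Position k (0-based) corresponds to
  position k+1 of the paper.\<close>

definition circuits :: "nat set \<Rightarrow> nat \<Rightarrow> nat list set" where
  "circuits V N = {xs. length xs = N \<and> set xs = V}"

definition black :: "nat list \<Rightarrow> nat set" where
  "black xs = {xs ! k | k. k < length xs \<and> even k}"

definition is_balanced_leaf :: "nat list \<Rightarrow> nat \<Rightarrow> bool" where
  "is_balanced_leaf xs v \<longleftrightarrow> length xs > 2 \<and> count_list xs v = 1 \<and>
     (\<exists>k < length xs. xs ! k = v \<and>
        xs ! ((k + length xs - 1) mod length xs) = xs ! ((k + 1) mod length xs))"

definition balanced_leaves :: "nat list \<Rightarrow> nat set" where
  "balanced_leaves xs = {v. is_balanced_leaf xs v}"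

definition remove_leaf :: "nat list \<Rightarrow> nat \<Rightarrow> nat list" where
  "remove_leaf xs v = (let k = (LEAST k. k < length xs \<and> xs ! k = v) in
     if k < length xs - 1 then take k xs @ drop (k + 2) xs
     else take (length xs - 2) xs)"

lemma balanced_leaves_finite: "finite (balanced_leaves xs)"
proof -
  have "balanced_leaves xs \<subseteq> set xs"
    unfolding balanced_leaves_def is_balanced_leaf_def by (auto simp: count_list_0_iff[symmetric])
  thus ?thesis by (rule finite_subset) simp
qed

lemma remove_leaf_length:
  assumes "length xs > 2" shows "length (remove_leaf xs v) < length xs"
  using assms unfolding remove_leaf_def Let_def by auto

function seed :: "nat list \<Rightarrow> nat list" where
  "seed xs = (if balanced_leaves xs = {} then xs
              else seed (remove_leaf xs (Min (balanced_leaves xs))))"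
  by auto
termination
proof (relation "measure length")
  fix xs assume "balanced_leaves xs \<noteq> {}"
  then have "length xs > 2" unfolding balanced_leaves_def is_balanced_leaf_def by auto
  thus "(remove_leaf xs (Min (balanced_leaves xs)), xs) \<in> measure length"
    using remove_leaf_length by simp
qed simp

end

theory Submission
  imports Defs
begin


definition idx :: "nat list \<Rightarrow> nat \<Rightarrow> nat" where
  "idx xs v = (LEAST k. k < length xs \<and> xs ! k = v)"

definition dupof :: "nat list \<Rightarrow> nat \<Rightarrow> nat" where
  "dupof H k = (if k \<le> length H then H ! ((k + length H - 1) mod length H) else H ! 0)"

definition ins :: "nat list \<Rightarrow> nat \<Rightarrow> nat \<Rightarrow> nat list" where
  "ins H k v = (if k \<le> length H then take k H @ [v, dupof H k] @ drop k H else H @ [H ! 0, v])"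

lemma count1_unique:
  "count_list xs w = 1 \<Longrightarrow> i < length xs \<Longrightarrow> j < length xs \<Longrightarrow> xs ! i = w \<Longrightarrow> xs ! j = w \<Longrightarrow> i = j"
proof (induction xs arbitrary: i j)
  case Nil then show ?case by simp
next
  case (Cons a xs)
  show ?case
  proof (cases i)
    case 0
    then show ?thesis using Cons.prems
      by (cases j) (auto simp: count_list_0_iff)
  next
    case (Suc i')
    then show ?thesis using Cons
      by (cases j) (auto simp: count_list_0_iff split: if_splits)
  qed
qed

lemma idx_eq: "count_list xs w = 1 \<Longrightarrow> k < length xs \<Longrightarrow> xs ! k = w \<Longrightarrow> idx xs w = k"
  unfolding idx_def
proof (rule Least_equality)
  assume a: "count_list xs w = 1" "k < length xs" "xs ! k = w"
  then show "k < length xs \<and> xs ! k = w" by simp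
  fix y assume "y < length xs \<and> xs ! y = w"
  then show "k \<le> y" using count1_unique[OF a(1) a(2), of y] a by simp
qed

lemma idx_eq2: "k < length xs \<Longrightarrow> xs ! k = w \<Longrightarrow> (\<forall>j<k. xs ! j \<noteq> w) \<Longrightarrow> idx xs w = k"
  unfolding idx_def
  by (rule Least_equality) (auto simp: not_less[symmetric])

lemma leaf_char:
  assumes "count_list xs w = 1" "j < length xs" "xs ! j = w"
  shows "is_balanced_leaf xs w \<longleftrightarrow> length xs > 2 \<and>
     xs ! ((j + length xs - 1) mod length xs) = xs ! ((j + 1) mod length xs)"
  using assms count1_unique[OF assms(1)] unfolding is_balanced_leaf_def by metis

lemma leaf_count: "is_balanced_leaf xs w \<Longrightarrow> count_list xs w = 1"
  unfolding is_balanced_leaf_def by simp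

lemma leaf_idx: assumes "is_balanced_leaf xs w"
  shows "idx xs w < length xs" "xs ! idx xs w = w"
    "xs ! ((idx xs w + length xs - 1) mod length xs) = xs ! ((idx xs w + 1) mod length xs)"
    "length xs > 2"
proof -
  obtain k where k: "k < length xs" "xs ! k = w"
    "xs ! ((k + length xs - 1) mod length xs) = xs ! ((k + 1) mod length xs)"
    using assms unfolding is_balanced_leaf_def by blast
  have "idx xs w = k" using idx_eq[OF leaf_count[OF assms] k(1,2)] .
  then show "idx xs w < length xs" "xs ! idx xs w = w"
    "xs ! ((idx xs w + length xs - 1) mod length xs) = xs ! ((idx xs w + 1) mod length xs)"
    using k by auto
  show "length xs > 2" using assms unfolding is_balanced_leaf_def by simp
qed

lemma remove_leaf_idx: "remove_leaf xs v = (if idx xs v < length xs - 1 then take (idx xs v) xs @ drop (idx xs v + 2) xs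
     else take (length xs - 2) xs)"
  unfolding remove_leaf_def idx_def Let_def by simp

lemma mod_prev: assumes "0 < (n::nat)" "k < n" shows "(k + n - 1) mod n = (if k = 0 then n - 1 else k - 1)"
proof (cases k)
  case 0 then show ?thesis using assms by simp
next
  case (Suc m)
  then have "k + n - 1 = m + n" by simp
  then show ?thesis using Suc assms by simp
qed

lemma mod_prev2: assumes "0 < k" "k \<le> (n::nat)" shows "(k + n - 1) mod n = k - 1"
proof -
  have e: "k + n - 1 = (k - 1) + n" using assms by simp
  have "(k + n - 1) mod n = ((k - 1) + n) mod n" by (subst e) (rule refl)
  also have "\<dots> = (k - 1) mod n" by simp
  also have "\<dots> = k - 1" using assms by simp
  finally show ?thesis .
qed

lemma mod_next: "(k::nat) < n \<Longrightarrow> (k + 1) mod n = (if k + 1 = n then 0 else k + 1)"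
  by (cases "k + 1 = n") auto

lemma reconstruct:
  assumes "is_balanced_leaf G v"
  shows "ins (remove_leaf G v) (idx G v) v = G"
proof -
  define k where "k = idx G v"
  define N where "N = length G"
  have k: "k < N" "G ! k = v" and nb: "G ! ((k + N - 1) mod N) = G ! ((k + 1) mod N)" and N: "N > 2"
    using leaf_idx[OF assms] unfolding k_def N_def by auto
  show ?thesis
  proof (cases "k < N - 1")
    case True
    define H where "H = take k G @ drop (k + 2) G"
    have rl: "remove_leaf G v = H" unfolding remove_leaf_idx H_def k_def[symmetric] N_def[symmetric] using True by simp
    have lH: "length H = N - 2" unfolding H_def N_def using True N_def by auto
    have kle: "k \<le> length H" using True lH by simp
    have d: "dupof H k = G ! (k + 1)"
    proof (cases "k = 0")
      case True
      then have "dupof H k = H ! (N - 3)" unfolding dupof_def using lH N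
        by (simp add: mod_prev)
      also have "\<dots> = G ! (N - 1)" unfolding H_def using True N N_def
        by (simp add: nth_append) (metis Suc_diff_Suc Suc_lessD diff_Suc_1 numeral_2_eq_2 numeral_3_eq_3)
      also have "\<dots> = G ! (k + 1)" using nb True N by (simp add: mod_prev mod_next)
      finally show ?thesis .
    next
      case False
      then have "dupof H k = H ! (k - 1)" unfolding dupof_def using lH N kle
        by (simp add: mod_if)
      also have "\<dots> = G ! (k - 1)" unfolding H_def using False k N_def by (simp add: nth_append)
      also have "\<dots> = G ! (k + 1)"
      proof -
        have "(k + N - 1) mod N = k - 1" using mod_prev[of N k] False k by simp
        moreover have "(k + 1) mod N = k + 1" using mod_next[of k N] \<open>k < N - 1\<close> k by simp
        ultimately show ?thesis using nb by simp
      qed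
      finally show ?thesis .
    qed
    have "ins H k v = take k G @ [G ! k, G ! (k + 1)] @ drop (k + 2) G"
      unfolding ins_def using kle d k unfolding H_def by simp
    also have "\<dots> = G"
      using True k N_def by (simp add: Cons_nth_drop_Suc) (metis id_take_nth_drop)
    finally show ?thesis using rl k_def by simp
  next
    case False
    then have kN: "k = N - 1" using k by simp
    define H where "H = take (N - 2) G"
    have rl: "remove_leaf G v = H" unfolding remove_leaf_idx H_def k_def[symmetric] N_def[symmetric] using False by simp
    have lH: "length H = N - 2" unfolding H_def N_def by simp
    have "G ! (N - 2) = G ! 0"
    proof -
      have "(k + N - 1) mod N = N - 2" using mod_prev[of N k] kN N by simp
      moreover have "(k + 1) mod N = 0" using kN N by simp
      ultimately show ?thesis using nb by simp
    qed
    moreover have "\<not> k \<le> length H" using lH kN N by simp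
    then have "ins H k v = H @ [H ! 0, v]" unfolding ins_def by simp
    moreover have "H ! 0 = G ! 0" using N unfolding H_def by simp
    ultimately have "ins H k v = take (N - 2) G @ [G ! (N - 2), G ! (N - 1)]"
      using kN k unfolding H_def by simp
    also have "\<dots> = G"
    proof -
      have "drop (N - 2) G = [G ! (N - 2), G ! (N - 1)]"
      proof -
        have a: "drop N G = []" using N_def by simp
        have b: "drop (N - 1) G = [G ! (N - 1)]" using Cons_nth_drop_Suc[of "N - 1" G] a N N_def by simp
        show ?thesis using Cons_nth_drop_Suc[of "N - 2" G] b N N_def
          by (simp add: Suc_diff_Suc numeral_2_eq_2)
      qed
      then show ?thesis by (metis append_take_drop_id)
    qed
    finally show ?thesis using rl k_def by simp
  qed
qed


lemma length_ins: "length (ins H k v) = length H + 2"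
  unfolding ins_def by auto

lemma dup_idx: "H \<noteq> [] \<Longrightarrow> \<exists>j<length H. dupof H k = H ! j"
proof (cases "k \<le> length H")
  case True
  assume "H \<noteq> []"
  then show ?thesis using True unfolding dupof_def
    by (intro exI[of _ "(k + length H - 1) mod length H"]) simp
next
  case False
  assume "H \<noteq> []"
  then show ?thesis using False unfolding dupof_def by (intro exI[of _ 0]) simp
qed

lemma dup_in: "H \<noteq> [] \<Longrightarrow> dupof H k \<in> set H"
  using dup_idx[of H k] by auto

lemma set_ins: "H \<noteq> [] \<Longrightarrow> set (ins H k v) = insert v (set H)"
  unfolding ins_def using dup_in[of H k]
  by (auto simp: dupof_def) (metis append_take_drop_id set_append Un_iff)+

lemma count_ins: "count_list (ins H k v) w = count_list H w + (if w = v then 1 else 0) + (if w = dupof H k then 1 else 0)"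
proof (cases "k \<le> length H")
  case True
  have "count_list H w = count_list (take k H) w + count_list (drop k H) w"
    by (metis append_take_drop_id count_list_append)
  then show ?thesis using True unfolding ins_def by auto
next
  case False
  then show ?thesis unfolding ins_def dupof_def by auto
qed

lemma ins_nth1: "k \<le> length H \<Longrightarrow> i < length H + 2 \<Longrightarrow>
   ins H k v ! i = (if i < k then H ! i else if i = k then v else if i = k + 1 then dupof H k else H ! (i - 2))"
  unfolding ins_def by (auto simp: nth_append min_def nth_Cons')

lemma ins_nth2: "\<not> k \<le> length H \<Longrightarrow> i < length H + 2 \<Longrightarrow>
   ins H k v ! i = (if i < length H then H ! i else if i = length H then H ! 0 else v)"
  unfolding ins_def by (auto simp: nth_append nth_Cons')


lemma count_ins_v: "v \<notin> set H \<Longrightarrow> H \<noteq> [] \<Longrightarrow> count_list (ins H k v) v = 1"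
  using count_ins[of H k v v] dup_in[of H k] by (auto simp: count_list_0_iff)

lemma ins_nth_k: "k \<le> length H + 1 \<Longrightarrow> ins H k v ! k = v"
  by (cases "k \<le> length H") (auto simp: ins_nth1 ins_nth2)

lemma leaf_ins_v:
  assumes "v \<notin> set H" "H \<noteq> []" "k \<le> length H + 1"
  shows "is_balanced_leaf (ins H k v) v"
proof -
  define M where "M = length H"
  have M: "M > 0" using assms(2) M_def by simp
  have L: "length (ins H k v) = M + 2" using length_ins M_def by simp
  have "ins H k v ! ((k + (M+2) - 1) mod (M+2)) = ins H k v ! ((k + 1) mod (M+2))"
  proof (cases "k \<le> M")
    case True
    have n: "(k + 1) mod (M+2) = k + 1" using True by simp
    have n2: "ins H k v ! (k + 1) = dupof H k" using True M_def by (simp add: ins_nth1)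
    show ?thesis
    proof (cases "k = 0")
      case True
      have "(k + (M+2) - 1) mod (M+2) = M + 1" using True by simp
      moreover have "ins H k v ! (M + 1) = H ! (M - 1)" using True M M_def by (simp add: ins_nth1)
      moreover have "dupof H k = H ! (M - 1)" using True M M_def unfolding dupof_def by simp
      ultimately show ?thesis using n n2 by simp
    next
      case False
      have "(k + (M+2) - 1) mod (M+2) = k - 1" using mod_prev[of "M+2" k] False \<open>k \<le> M\<close> by simp
      moreover have "ins H k v ! (k - 1) = H ! (k - 1)" using False \<open>k \<le> M\<close> M_def by (simp add: ins_nth1)
      moreover have "(k + M - 1) mod M = k - 1" using mod_prev2[of k M] False \<open>k \<le> M\<close> by simp
      moreover have "dupof H k = H ! ((k + M - 1) mod M)" using \<open>k \<le> M\<close> M_def unfolding dupof_def by simp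
      ultimately show ?thesis using n n2 by simp
    qed
  next
    case False
    then have k: "k = M + 1" using assms(3) M_def by simp
    have "(k + (M+2) - 1) mod (M+2) = M" using k mod_prev2[of k "M+2"] by simp
    moreover have "(k + 1) mod (M+2) = 0" using k by simp
    moreover have "ins H k v ! M = H ! 0" using False M_def by (simp add: ins_nth2)
    moreover have "ins H k v ! 0 = H ! 0" using False M_def M by (simp add: ins_nth2)
    ultimately show ?thesis by simp
  qed
  moreover have "k < length (ins H k v)" using L assms(3) M_def by simp
  ultimately show ?thesis
    using leaf_char[OF count_ins_v[OF assms(1,2)], of k k] ins_nth_k[OF assms(3), of v] L M by simp
qed

lemma idx_ins: "v \<notin> set H \<Longrightarrow> H \<noteq> [] \<Longrightarrow> k \<le> length H + 1 \<Longrightarrow> idx (ins H k v) v = k"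
  using idx_eq[OF count_ins_v, of v H k k] ins_nth_k[of k H v] length_ins[of H k v] by simp

lemma remove_ins:
  assumes "v \<notin> set H" "H \<noteq> []" "k \<le> length H + 1"
  shows "remove_leaf (ins H k v) v = H"
proof (cases "k \<le> length H")
  case True
  then show ?thesis unfolding remove_leaf_idx idx_ins[OF assms] length_ins
    unfolding ins_def by simp
next
  case False
  then show ?thesis unfolding remove_leaf_idx idx_ins[OF assms] length_ins
    unfolding ins_def by simp
qed


lemma leaf_char2:
  assumes "count_list xs w = 1" "j < length xs" "xs ! j = w"
  shows "is_balanced_leaf xs w \<longleftrightarrow> length xs > 2 \<and>
     xs ! (if j = 0 then length xs - 1 else j - 1) = xs ! (if j + 1 = length xs then 0 else j + 1)"
proof -
  have "(j + length xs - 1) mod length xs = (if j = 0 then length xs - 1 else j - 1)"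
  proof (cases "j = 0")
    case True then show ?thesis using assms(2) by simp
  next
    case False then show ?thesis using mod_prev2[of j "length xs"] assms(2) by simp
  qed
  moreover have "(j + 1) mod length xs = (if j + 1 = length xs then 0 else j + 1)"
    using mod_next[of j "length xs"] assms(2) by simp
  ultimately show ?thesis using leaf_char[OF assms] by simp
qed

lemma dupof1: "k \<le> length H \<Longrightarrow> H \<noteq> [] \<Longrightarrow> dupof H k = H ! (if k = 0 then length H - 1 else k - 1)"
  unfolding dupof_def using mod_prev2[of k "length H"] by auto

lemma count_pos: "count_list xs w = Suc 0 \<Longrightarrow> w \<in> set xs"
  by (metis count_list_0_iff nat.distinct(1))

lemma leaf_ins_other:
  assumes "w \<noteq> v" "H \<noteq> []" "is_balanced_leaf (ins H k v) w"
  shows "w \<in> set H \<and> count_list H w = 1 \<and> w \<noteq> dupof H k"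
proof -
  have c: "count_list (ins H k v) w = 1" using leaf_count[OF assms(3)] .
  have "w \<noteq> dupof H k"
  proof
    assume "w = dupof H k"
    then have "count_list H w \<ge> 1" using dup_in[OF assms(2), of k]
      by (metis count_list_0_iff less_one not_le)
    then show False using c count_ins[of H k v w] \<open>w = dupof H k\<close> by simp
  qed
  then show ?thesis using c count_ins[of H k v w] assms(1)
    by (auto intro: count_pos)
qed

lemma leaf_ins_iff:
  assumes "w \<noteq> v" "v \<notin> set H" "length H \<ge> 3" "k \<le> length H + 1"
  shows "is_balanced_leaf (ins H k v) w \<longleftrightarrow> is_balanced_leaf H w \<and> w \<noteq> dupof H k"
proof (cases "count_list H w = 1 \<and> w \<noteq> dupof H k")
  case False
  have "H \<noteq> []" using assms(3) by auto
  then show ?thesis using False leaf_ins_other[OF assms(1), of H k] leaf_count[of H w] by auto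
next
  case True
  define M where "M = length H"
  have M: "M \<ge> 3" using assms(3) M_def by simp
  have cI: "count_list (ins H k v) w = 1" using True count_ins[of H k v w] assms(1) by simp
  have "w \<in> set H" using True by (metis count_list_0_iff zero_neq_one)
  then obtain j where j: "j < M" "H ! j = w" unfolding M_def by (metis in_set_conv_nth)
  have LI: "length (ins H k v) = M + 2" using length_ins M_def by simp
  have lH: "is_balanced_leaf H w \<longleftrightarrow>
     H ! (if j = 0 then M - 1 else j - 1) = H ! (if j + 1 = M then 0 else j + 1)"
    using leaf_char2[of H w j] True j M M_def by simp
  show ?thesis
  proof (cases "k \<le> M")
    case kM: True
    have "H \<noteq> []" using M M_def by auto
    then have d: "dupof H k = H ! (if k = 0 then M - 1 else k - 1)" using dupof1[of k H] kM M_def by simp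
    have nth: "\<And>i. i < M + 2 \<Longrightarrow> ins H k v ! i = (if i < k then H ! i else if i = k then v else if i = k + 1 then dupof H k else H ! (i - 2))"
      using ins_nth1[of k H] kM M_def by simp
    show ?thesis
    proof (cases "j < k")
      case jk: True
      have wI: "ins H k v ! j = w" using nth[of j] jk j by simp
      have lI: "is_balanced_leaf (ins H k v) w \<longleftrightarrow>
         ins H k v ! (if j = 0 then M + 1 else j - 1) = ins H k v ! (j + 1)"
        using leaf_char2[OF cI, of j] LI wI jk j by simp
      have "ins H k v ! (if j = 0 then M + 1 else j - 1) = H ! (if j = 0 then M - 1 else j - 1)"
        using nth jk j kM d by (cases "j = 0"; cases "k = M") auto
      moreover have "ins H k v ! (j + 1) = H ! (if j + 1 = M then 0 else j + 1)"
        using nth[of "j+1"] jk j kM d True by (cases "j + 1 = k") auto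
      ultimately show ?thesis using lI lH True by simp
    next
      case jk: False
      have wI: "ins H k v ! (j + 2) = w" using nth[of "j + 2"] jk j by simp
      have lI: "is_balanced_leaf (ins H k v) w \<longleftrightarrow>
         ins H k v ! (j + 1) = ins H k v ! (if j + 1 = M then 0 else j + 3)"
        using leaf_char2[OF cI, of "j + 2"] LI wI jk j by (simp add: numeral_3_eq_3)
      have "ins H k v ! (j + 1) = H ! (if j = 0 then M - 1 else j - 1)"
        using nth[of "j + 1"] jk j kM d by (cases "j = k") auto
      moreover have "ins H k v ! (if j + 1 = M then 0 else j + 3) = H ! (if j + 1 = M then 0 else j + 1)"
        using nth jk j kM d True M by (cases "j + 1 = M"; cases "k = 0") auto
      ultimately show ?thesis using lI lH True by simp
    qed
  next
    case kM: False
    have d: "dupof H k = H ! 0" using kM M_def unfolding dupof_def by simp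
    have nth: "\<And>i. i < M + 2 \<Longrightarrow> ins H k v ! i = (if i < M then H ! i else if i = M then H ! 0 else v)"
      using ins_nth2[of k H] kM M_def by simp
    have wI: "ins H k v ! j = w" using nth[of j] j by simp
    have lI: "is_balanced_leaf (ins H k v) w \<longleftrightarrow>
       ins H k v ! (if j = 0 then M + 1 else j - 1) = ins H k v ! (j + 1)"
      using leaf_char2[OF cI, of j] LI wI j by simp
    have j0: "j \<noteq> 0" using True d j by (cases j) auto
    have "ins H k v ! (if j = 0 then M + 1 else j - 1) = H ! (if j = 0 then M - 1 else j - 1)"
      using nth[of "j - 1"] j j0 by auto
    moreover have "ins H k v ! (j + 1) = H ! (if j + 1 = M then 0 else j + 1)"
      using nth[of "j+1"] j by auto
    ultimately show ?thesis using lI lH True by simp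
  qed
qed


definition dupi :: "nat \<Rightarrow> nat \<Rightarrow> nat" where
  "dupi n k = (if k \<le> n then (k + n - 1) mod n else 0)"

lemma dupof_dupi: "dupof H k = H ! dupi (length H) k"
  unfolding dupof_def dupi_def by simp

lemma dupi_less: "0 < n \<Longrightarrow> dupi n k < n"
  unfolding dupi_def by simp

lemma list_all2_ins:
  assumes "list_all2 R A B" "R v v" "A \<noteq> []"
  shows "list_all2 R (ins A k v) (ins B k v)"
proof -
  note False = assms(3)
  have l: "length A = length B" using assms(1) by (rule list_all2_lengthD)
  have d: "R (dupof A k) (dupof B k)"
    unfolding dupof_dupi l using list_all2_nthD[OF assms(1), of "dupi (length B) k"] dupi_less[of "length B" k] False l
    by fastforce
  have h0: "R (A ! 0) (B ! 0)" using list_all2_nthD[OF assms(1), of 0] False by simp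
  show ?thesis
  proof (cases "k \<le> length A")
    case True
    then show ?thesis unfolding ins_def l[symmetric] using True assms d
      by (simp add: list_all2_appendI list_all2_takeI list_all2_dropI)
  next
    case False
    then show ?thesis unfolding ins_def l[symmetric] using False assms h0
      by (simp add: list_all2_appendI)
  qed
qed

lemma remove_props:
  assumes "is_balanced_leaf G v"
  defines "H \<equiv> remove_leaf G v"
  shows "v \<notin> set H" "H \<noteq> []" "length G = length H + 2" "idx G v \<le> length H + 1"
    "set G = insert v (set H)" "G = ins H (idx G v) v"
proof -
  have G: "G = ins H (idx G v) v" using reconstruct[OF assms(1)] H_def by simp
  then show "G = ins H (idx G v) v" .
  have lG: "length G = length H + 2" by (subst G) (simp add: length_ins)
  then show "length G = length H + 2" .
  have "length G > 2" using leaf_idx(4)[OF assms(1)] .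
  then show Hn: "H \<noteq> []" using lG by auto
  show "idx G v \<le> length H + 1" using leaf_idx(1)[OF assms(1)] lG by simp
  have "count_list G v = 1" using leaf_count[OF assms(1)] .
  then have "count_list H v = 0" using count_ins[of H "idx G v" v v] G by simp
  then show "v \<notin> set H" by (simp add: count_list_0_iff)
  show "set G = insert v (set H)" by (subst G) (simp add: set_ins[OF Hn])
qed

declare seed.simps[simp del]

lemma seed_step: "balanced_leaves G \<noteq> {} \<Longrightarrow> seed G = seed (remove_leaf G (Min (balanced_leaves G)))"
  by (subst seed.simps) simp

lemma seed_base: "balanced_leaves G = {} \<Longrightarrow> seed G = G"
  by (subst seed.simps) simp

lemma min_leaf: "balanced_leaves G \<noteq> {} \<Longrightarrow> is_balanced_leaf G (Min (balanced_leaves G))"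
  using Min_in[OF balanced_leaves_finite] unfolding balanced_leaves_def by auto

lemma seed_sub: "set (seed G) \<subseteq> set G \<and> length (seed G) \<le> length G"
proof (induction G rule: seed.induct)
  case (1 G)
  show ?case
  proof (cases "balanced_leaves G = {}")
    case True then show ?thesis by (simp add: seed_base)
  next
    case False
    note mp = remove_props[OF min_leaf[OF False]]
    show ?thesis using 1[OF False] mp(3,5) seed_step[OF False] by auto
  qed
qed

lemma short_noleaf: "length G \<le> 2 \<Longrightarrow> balanced_leaves G = {}"
  unfolding balanced_leaves_def is_balanced_leaf_def by auto

function phi :: "nat list \<Rightarrow> nat list \<Rightarrow> nat list" where
  "phi c xs = (if balanced_leaves xs = {} then c
     else (let v = Min (balanced_leaves xs) in ins (phi c (remove_leaf xs v)) (idx xs v) v))"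
  by auto
termination
proof (relation "measure (\<lambda>(c, xs). length xs)")
  fix c xs v assume "balanced_leaves xs \<noteq> {}"
  then have "length xs > 2" unfolding balanced_leaves_def is_balanced_leaf_def by auto
  thus "((c, remove_leaf xs v), c, xs) \<in> measure (\<lambda>(c, xs). length xs)"
    using remove_leaf_length by simp
qed simp

declare phi.simps[simp del]

lemma phi_base: "balanced_leaves xs = {} \<Longrightarrow> phi c xs = c"
  by (subst phi.simps) simp

lemma phi_step: "balanced_leaves xs \<noteq> {} \<Longrightarrow> phi c xs =
   ins (phi c (remove_leaf xs (Min (balanced_leaves xs)))) (idx xs (Min (balanced_leaves xs))) (Min (balanced_leaves xs))"
  by (subst phi.simps) (simp add: Let_def)



definition rel :: "nat set \<Rightarrow> nat \<Rightarrow> nat \<Rightarrow> bool" where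
  "rel V x y \<longleftrightarrow> ((x \<in> V \<or> y \<in> V) \<longrightarrow> x = y)"

lemma main:
  fixes g0 c :: "nat list" and V :: "nat set"
  assumes lc: "length c = length g0" and l2: "length g0 \<ge> 2"
    and bg: "balanced_leaves g0 = {}" and bc: "balanced_leaves c = {}"
    and dg: "set g0 \<inter> V = {}" and dc: "set c \<inter> V = {}"
    and big: "length c = 2 \<longrightarrow> (\<forall>a b. c = [a, b] \<and> a \<noteq> b \<longrightarrow> (\<forall>x\<in>V. x < a \<and> x < b))"
  shows "seed G = g0 \<Longrightarrow> set G \<subseteq> set g0 \<union> V \<Longrightarrow>
    list_all2 (rel V) G (phi c G) \<and> seed (phi c G) = c \<and>
    balanced_leaves (phi c G) \<inter> V = balanced_leaves G \<inter> V \<and>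
    (\<forall>w \<in> balanced_leaves (phi c G) - V. \<forall>x\<in>V. x < w) \<and>
    set (phi c G) = set c \<union> (set G \<inter> V) \<and> phi g0 (phi c G) = G"
proof (induction G rule: seed.induct)
  case (1 G)
  show ?case
  proof (cases "balanced_leaves G = {}")
    case True
    then have G: "G = g0" using "1.prems" seed_base by simp
    have pc: "phi c G = c" using phi_base[OF True] .
    have "list_all2 (rel V) g0 c"
    proof (rule list_all2_all_nthI)
      show "length g0 = length c" using lc by simp
      fix i assume "i < length g0"
      then have "g0 ! i \<in> set g0" "c ! i \<in> set c" using lc by auto
      then show "rel V (g0 ! i) (c ! i)" using dg dc unfolding rel_def by auto
    qed
    moreover have "phi g0 c = g0" using phi_base[OF bc] .
    ultimately show ?thesis using G pc bc bg seed_base[OF bc] dg by auto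
  next
    case False
    define v where "v = Min (balanced_leaves G)"
    define G' where "G' = remove_leaf G v"
    define k where "k = idx G v"
    have lv: "is_balanced_leaf G v" using min_leaf[OF False] v_def by simp
    note rp = remove_props[OF lv, folded G'_def k_def]
    have sG': "seed G' = g0" using "1.prems"(1) seed_step[OF False] G'_def v_def by simp
    have setG': "set G' \<subseteq> set g0 \<union> V" using "1.prems"(2) rp(5) by auto
    have "set g0 \<subseteq> set G'" "length g0 \<le> length G'" using seed_sub[of G'] sG' by auto
    then have vg0: "v \<notin> set g0" and lG': "length G' \<ge> 2" using rp(1) l2 by auto
    have vV: "v \<in> V" using vg0 "1.prems"(2) rp(5) by auto
    have IH: "list_all2 (rel V) G' (phi c G') \<and> seed (phi c G') = c \<and>
      balanced_leaves (phi c G') \<inter> V = balanced_leaves G' \<inter> V \<and>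
      (\<forall>w \<in> balanced_leaves (phi c G') - V. \<forall>x\<in>V. x < w) \<and>
      set (phi c G') = set c \<union> (set G' \<inter> V) \<and> phi g0 (phi c G') = G'"
      using "1.IH"[OF False] sG' setG' unfolding G'_def v_def by simp
    define H where "H = phi c G'"
    have la: "list_all2 (rel V) G' H" using IH H_def by simp
    have lH: "length H = length G'" using list_all2_lengthD[OF la] by simp
    have Hn: "H \<noteq> []" using lH rp(2) by auto
    have vH: "v \<notin> set H" using IH H_def rp(1) dc vV by auto
    have kH: "k \<le> length H + 1" using rp(4) lH by simp
    have PG: "phi c G = ins H k v" using phi_step[OF False] unfolding H_def G'_def k_def v_def by simp
    have Gi: "G = ins G' k v" using rp(6) .
    have vlP: "is_balanced_leaf (ins H k v) v" using leaf_ins_v[OF vH Hn kH] .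
    have leafV: "balanced_leaves (ins H k v) \<inter> V = balanced_leaves G \<inter> V \<and>
        (\<forall>w \<in> balanced_leaves (ins H k v) - V. \<forall>x\<in>V. x < w)"
    proof (cases "length G' \<ge> 3")
      case True
      have j: "dupi (length G') k < length G'" using dupi_less rp(2) by simp
      have dr: "rel V (dupof G' k) (dupof H k)"
        unfolding dupof_dupi lH using list_all2_nthD[OF la j] .
      have LP: "\<And>w. w \<noteq> v \<Longrightarrow> is_balanced_leaf (ins H k v) w \<longleftrightarrow> is_balanced_leaf H w \<and> w \<noteq> dupof H k"
        using leaf_ins_iff[OF _ vH _ kH] True lH by simp
      have LG: "\<And>w. w \<noteq> v \<Longrightarrow> is_balanced_leaf G w \<longleftrightarrow> is_balanced_leaf G' w \<and> w \<noteq> dupof G' k"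
        using leaf_ins_iff[OF _ rp(1) True rp(4)] Gi by metis
      have IHd: "\<And>w. w \<in> V \<Longrightarrow> is_balanced_leaf H w \<longleftrightarrow> is_balanced_leaf G' w"
        using IH H_def unfolding balanced_leaves_def by blast
      have IHe: "\<And>w x. is_balanced_leaf H w \<Longrightarrow> w \<notin> V \<Longrightarrow> x \<in> V \<Longrightarrow> x < w"
        using IH H_def unfolding balanced_leaves_def by blast
      have "\<And>w. w \<in> V \<Longrightarrow> is_balanced_leaf (ins H k v) w \<longleftrightarrow> is_balanced_leaf G w"
      proof -
        fix w assume wV: "w \<in> V"
        show "is_balanced_leaf (ins H k v) w \<longleftrightarrow> is_balanced_leaf G w"
        proof (cases "w = v")
          case True then show ?thesis using vlP lv by simp
        next
          case False
          have "w = dupof H k \<longleftrightarrow> w = dupof G' k" using dr wV unfolding rel_def by auto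
          then show ?thesis using LP[OF False] LG[OF False] IHd[OF wV] by simp
        qed
      qed
      moreover have "\<And>w x. is_balanced_leaf (ins H k v) w \<Longrightarrow> w \<notin> V \<Longrightarrow> x \<in> V \<Longrightarrow> x < w"
      proof -
        fix w x assume a: "is_balanced_leaf (ins H k v) w" "w \<notin> V" "x \<in> V"
        then have "w \<noteq> v" using vV by auto
        then have "is_balanced_leaf H w" using LP a(1) by simp
        then show "x < w" using IHe a by simp
      qed
      ultimately show ?thesis unfolding balanced_leaves_def by blast
    next
      case False
      then have l2': "length G' = 2" using lG' by simp
      then have "balanced_leaves G' = {}" using short_noleaf by simp
      then have G'0: "G' = g0" and Hc: "H = c" using sG' seed_base phi_base H_def by auto
      have o1: "\<And>w. w \<noteq> v \<Longrightarrow> is_balanced_leaf (ins H k v) w \<Longrightarrow> w \<in> set c \<and> count_list c w = 1"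
        using leaf_ins_other[OF _ Hn] Hc by blast
      have o2: "\<And>w. w \<noteq> v \<Longrightarrow> is_balanced_leaf G w \<Longrightarrow> w \<in> set g0"
        using leaf_ins_other[OF _ rp(2)] Gi G'0 by metis
      have "length c = 2" using lc l2' G'0 by simp
      then obtain a b where ab: "c = [a, b]"
        by (metis (no_types, lifting) One_nat_def Suc_1 length_0_conv length_Suc_conv)
      have bg2: "\<And>w x. w \<in> set c \<Longrightarrow> count_list c w = 1 \<Longrightarrow> x \<in> V \<Longrightarrow> x < w"
        using big ab \<open>length c = 2\<close> by (auto split: if_splits)
      have "\<And>w. w \<in> V \<Longrightarrow> is_balanced_leaf (ins H k v) w \<longleftrightarrow> is_balanced_leaf G w"
      proof -
        fix w assume wV: "w \<in> V"
        show "is_balanced_leaf (ins H k v) w \<longleftrightarrow> is_balanced_leaf G w"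
        proof (cases "w = v")
          case True then show ?thesis using vlP lv by simp
        next
          case False
          have "w \<notin> set c" "w \<notin> set g0" using wV dc dg by auto
          then show ?thesis using o1[OF False] o2[OF False] by blast
        qed
      qed
      moreover have "\<And>w x. is_balanced_leaf (ins H k v) w \<Longrightarrow> w \<notin> V \<Longrightarrow> x \<in> V \<Longrightarrow> x < w"
      proof -
        fix w x assume a: "is_balanced_leaf (ins H k v) w" "w \<notin> V" "x \<in> V"
        then have "w \<noteq> v" using vV by auto
        then show "x < w" using o1 a bg2 by blast
      qed
      ultimately show ?thesis unfolding balanced_leaves_def by blast
    qed
    have minP: "Min (balanced_leaves (ins H k v)) = v"
    proof (rule Min_eqI[OF balanced_leaves_finite])
      show "v \<in> balanced_leaves (ins H k v)" using vlP unfolding balanced_leaves_def by simp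
      fix w assume w: "w \<in> balanced_leaves (ins H k v)"
      show "v \<le> w"
      proof (cases "w \<in> V")
        case True
        then have "w \<in> balanced_leaves G" using leafV w by blast
        from Min_le[OF balanced_leaves_finite this] show ?thesis unfolding v_def .
      next
        case False
        then have "w \<in> balanced_leaves (ins H k v) - V" using w by simp
        then have "v < w" using leafV vV by blast
        then show ?thesis by simp
      qed
    qed
    have neP: "balanced_leaves (ins H k v) \<noteq> {}" using vlP unfolding balanced_leaves_def by auto
    have rmP: "remove_leaf (ins H k v) v = H" using remove_ins[OF vH Hn kH] .
    have idxP: "idx (ins H k v) v = k" using idx_ins[OF vH Hn kH] .
    have s1: "seed (phi c G) = c"
      unfolding PG using seed_step[OF neP] minP rmP IH H_def by simp
    have s2: "list_all2 (rel V) G (phi c G)"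
    proof -
      have "list_all2 (rel V) (ins G' k v) (ins H k v)"
        using list_all2_ins[OF la _ rp(2)] by (simp add: rel_def)
      then show ?thesis unfolding PG using Gi by simp
    qed
    have s3: "set (phi c G) = set c \<union> (set G \<inter> V)"
      unfolding PG using set_ins[OF Hn] IH H_def rp(5) vV by auto
    have s4: "phi g0 (phi c G) = G"
      unfolding PG using phi_step[OF neP] minP rmP idxP IH H_def Gi by simp
    show ?thesis using s1 s2 s3 s4 leafV PG by simp
  qed
qed



lemma black_rel: "list_all2 (rel V) G H \<Longrightarrow> black G \<inter> V = black H \<inter> V"
proof -
  assume a: "list_all2 (rel V) G H"
  have l: "length G = length H" using list_all2_lengthD[OF a] .
  have r: "\<And>i. i < length G \<Longrightarrow> rel V (G ! i) (H ! i)" using list_all2_nthD[OF a] .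
  show ?thesis unfolding black_def
  proof (intro equalityI subsetI)
    fix x assume "x \<in> {G ! k |k. k < length G \<and> even k} \<inter> V"
    then obtain k where "k < length G" "even k" "x = G ! k" "x \<in> V" by auto
    then show "x \<in> {H ! k |k. k < length H \<and> even k} \<inter> V" using r[of k] l unfolding rel_def by auto
  next
    fix x assume "x \<in> {H ! k |k. k < length H \<and> even k} \<inter> V"
    then obtain k where "k < length H" "even k" "x = H ! k" "x \<in> V" by auto
    then show "x \<in> {G ! k |k. k < length G \<and> even k} \<inter> V" using r[of k] l unfolding rel_def by (metis (mono_tags, lifting) IntI mem_Collect_eq)
  qed
qed

lemma transfer:
  fixes V0 V0' V' :: "nat set" and l0 :: nat and G0 G0' :: "nat list" and B :: "nat set"
  assumes "l0 \<ge> 1"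
    and "G0 \<in> circuits V0 (2 * l0)" "G0' \<in> circuits V0' (2 * l0)"
    and "balanced_leaves G0 = {}" "balanced_leaves G0' = {}"
    and "V' \<inter> V0 = {}" "V' \<inter> V0' = {}"
    and "l0 = 1 \<longrightarrow> (\<forall>a b. G0' = [a, b] \<and> a \<noteq> b \<longrightarrow> (\<forall>x\<in>V'. x < a \<and> x < b))"
    and G: "G \<in> {G \<in> circuits (V0 \<union> V') (2 * l0 + 2 * card V'). seed G = G0 \<and> black G \<inter> V' = B}"
  shows "phi G0' G \<in> {G \<in> circuits (V0' \<union> V') (2 * l0 + 2 * card V'). seed G = G0' \<and> black G \<inter> V' = B}
    \<and> phi G0 (phi G0' G) = G"
proof -
  have sG0: "set G0 = V0" "length G0 = 2 * l0" using assms(2) unfolding circuits_def by auto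
  have sG0': "set G0' = V0'" "length G0' = 2 * l0" using assms(3) unfolding circuits_def by auto
  have sG: "set G = V0 \<union> V'" "length G = 2 * l0 + 2 * card V'" "seed G = G0" "black G \<inter> V' = B"
    using G unfolding circuits_def by auto
  have M: "list_all2 (rel V') G (phi G0' G) \<and> seed (phi G0' G) = G0' \<and>
    balanced_leaves (phi G0' G) \<inter> V' = balanced_leaves G \<inter> V' \<and>
    (\<forall>w \<in> balanced_leaves (phi G0' G) - V'. \<forall>x\<in>V'. x < w) \<and>
    set (phi G0' G) = set G0' \<union> (set G \<inter> V') \<and> phi G0 (phi G0' G) = G"
    apply (rule main[of G0' G0 V' G])
    using sG0 sG0' sG assms by auto
  have "length (phi G0' G) = length G" using list_all2_lengthD[OF conjunct1[OF M]] by simp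
  moreover have "set (phi G0' G) = V0' \<union> V'" using M sG0' sG by auto
  moreover have "black (phi G0' G) \<inter> V' = B" using black_rel[OF conjunct1[OF M]] sG by simp
  ultimately show ?thesis using M sG unfolding circuits_def by auto
qed

theorem lemma5p1:
  fixes V0 V0' V' :: "nat set" and l0 :: nat and G0 G0' :: "nat list" and B :: "nat set"
  assumes "finite V0" "finite V0'" "finite V'"
    and "0 \<notin> V0" "0 \<notin> V0'" "0 \<notin> V'"
    and "l0 \<ge> 1"
    and "G0 \<in> circuits V0 (2 * l0)" "G0' \<in> circuits V0' (2 * l0)"
    and "balanced_leaves G0 = {}" "balanced_leaves G0' = {}"
    and "V' \<inter> V0 = {}" "V' \<inter> V0' = {}"
    and "l0 = 1 \<longrightarrow> (\<forall>a b. G0 = [a, b] \<and> a \<noteq> b \<longrightarrow> (\<forall>x\<in>V'. x < a \<and> x < b))"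
    and "l0 = 1 \<longrightarrow> (\<forall>a b. G0' = [a, b] \<and> a \<noteq> b \<longrightarrow> (\<forall>x\<in>V'. x < a \<and> x < b))"
    and "B \<subseteq> V'"
  shows "card {G \<in> circuits (V0 \<union> V') (2 * l0 + 2 * card V'). seed G = G0 \<and> black G \<inter> V' = B}
       = card {G \<in> circuits (V0' \<union> V') (2 * l0 + 2 * card V'). seed G = G0' \<and> black G \<inter> V' = B}"
proof (rule bij_betw_same_card[of "phi G0'"], rule bij_betw_byWitness[where f' = "phi G0"])
  let ?A = "{G \<in> circuits (V0 \<union> V') (2 * l0 + 2 * card V'). seed G = G0 \<and> black G \<inter> V' = B}"
  let ?A' = "{G \<in> circuits (V0' \<union> V') (2 * l0 + 2 * card V'). seed G = G0' \<and> black G \<inter> V' = B}"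
  have T1: "\<And>G. G \<in> ?A \<Longrightarrow> phi G0' G \<in> ?A' \<and> phi G0 (phi G0' G) = G"
    using transfer[of l0 G0 V0 G0' V0' V' _ B] assms by blast
  have T2: "\<And>G. G \<in> ?A' \<Longrightarrow> phi G0 G \<in> ?A \<and> phi G0' (phi G0 G) = G"
    using transfer[of l0 G0' V0' G0 V0 V' _ B] assms by blast
  show "\<forall>a\<in>?A. phi G0 (phi G0' a) = a" using T1 by blast
  show "\<forall>a\<in>?A'. phi G0' (phi G0 a) = a" using T2 by blast
  show "phi G0' ` ?A \<subseteq> ?A'" using T1 by blast
  show "phi G0 ` ?A' \<subseteq> ?A" using T2 by blast
qed

end
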